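(* Let $n>1$ and $1\le k\le n$ be integers. Let $\boldsymbol S$ be the $(2n-1)\times n$ matrix such that for every $\boldsymbol b=(b_1,\dots,b_n)'\in\mathbb R^n$, writing $a_i=\sum_{j=1}^i b_j$, $$\boldsymbol S\boldsymbol b=(a_n,a_{n-1},\dots,a_2,b_1,b_2,\dots,b_n)'.$$ Let $\boldsymbol S_{[k]}$ be the $(2n-1)\times n$ matrix such that for every $\boldsymbol c=(c_1,\dots,c_n)'\in\mathbb R^n$, $$\boldsymbol S_{[k]}\boldsymbol c=(\alpha_n,\alpha_{n-1},\dots,\alpha_{k+1},\alpha_{k-1},\dots,\alpha_1,c_1,\dots,c_n)',\qquad \alpha_i=\begin{cases}\sum_{j=k}^{i}c_j,& i>k,\\ \sum_{j=i}^{k}c_j,& i\le k.\end{cases}$$ Let $\boldsymbol B_{[k]}$ be the $(2n-1)\times(2n-1)$ signed permutation matrix defined as follows: if $k=1$, $\boldsymbol B_{[1]}=\boldsymbol I_{2n-1}$; if $k\ge 2$, then for every $\boldsymbol z=(u_n,\dots,u_{k+1},u_{k-1},\dots,u_1,v_1,\dots,v_n)'\in\mathbb R^{2n-1}$, $$\boldsymbol B_{[k]}\boldsymbol z=(u_n,\dots,u_{k+1},\,v_k,\,u_{k-1},\dots,u_2,\,u_1,\,-v_1,\dots,-v_{k-1},\,v_{k+1},\dots,v_n)'.$$ Let $\boldsymbol W$ be an invertible $(2n-1)\times(2n-1)$ matrix such that $\boldsymbol S'\boldsymbol W^{-1}\boldsymbol S$ is invertible, and let $\boldsymbol W_{[k]}$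 be an invertible $(2n-1)\times(2n-1)$ matrix. Let $\widehat{\boldsymbol y},\widehat{\boldsymbol y}_{[k]}\in\mathbb R^{2n-1}$ and define $$\widetilde{\boldsymbol y}=\boldsymbol S(\boldsymbol S'\boldsymbol W^{-1}\boldsymbol S)^{-1}\boldsymbol S'\boldsymbol W^{-1}\widehat{\boldsymbol y},\qquad \widetilde{\boldsymbol y}_{[k]}=\boldsymbol S_{[k]}(\boldsymbol S_{[k]}'\boldsymbol W_{[k]}^{-1}\boldsymbol S_{[k]})^{-1}\boldsymbol S_{[k]}'\boldsymbol W_{[k]}^{-1}\widehat{\boldsymbol y}_{[k]}.$$ If $\widehat{\boldsymbol y}=\boldsymbol B_{[k]}\widehat{\boldsymbol y}_{[k]}$ and $\boldsymbol W_{[k]}^{-1}=\boldsymbol B_{[k]}'\boldsymbol W^{-1}\boldsymbol B_{[k]}$, then $\boldsymbol S_{[k]}'\boldsymbol W_{[k]}^{-1}\boldsymbol S_{[k]}$ is invertible (so $\widetilde{\boldsymbol y}_{[k]}$ is well defined) and $$\widetilde{\boldsymbol y}=\boldsymbol B_{[k]}\widetilde{\boldsymbol y}_{[k]}.$$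
   Context: This concerns hierarchical (minimum-trace/GLS) forecast reconciliation of an aggregated curve given by cumulative values $\boldsymbol a=(a_1,\dots,a_n)'$. The canonical representation uses bottom values $b_1=a_1$, $b_i=a_i-a_{i-1}$ ($i>1$) and the stacked vector $\boldsymbol y=(a_n,\dots,a_2,b_1,\dots,b_n)'=\boldsymbol S\boldsymbol b$. An alternative representation disaggregates starting from position $k$: $b_{[k],i}=a_i-a_{i-1}$ for $i>k$, $b_{[k],i}=a_i-a_{i+1}$ for $i<k$, $b_{[k],k}=a_k$, with stacked vector $\boldsymbol y_{[k]}=(a_n,\dots,a_{k+1},a_{k-1},\dots,a_1,\boldsymbol b_{[k]}')'=\boldsymbol S_{[k]}\boldsymbol b_{[k]}$; the matrix $\boldsymbol B_{[k]}$ (orthogonal) satisfies $\boldsymbol y=\boldsymbol B_{[k]}\boldsymbol y_{[k]}$ for such coherent vectors. $\widehat{\boldsymbol y}$, $\widehat{\boldsymbol y}_{[k]}$ are (possibly incoherent) base forecasts and $\widetilde{\boldsymbol y}$, $\widetilde{\boldsymbol y}_{[k]}$ the optimally reconciled forecasts with weight matrices $\boldsymbol W$, $\boldsymbol W_{[k]}$ (in the paper, $\boldsymbol W$ is the covariance matrix of base forecast errors). *)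

theory Defs
  imports "Jordan_Normal_Form.Gauss_Jordan_Elimination"
begin

(* Matrices are Jordan_Normal_Form matrices with 0-based indices.
   Row/column positions p = 0 .. 2n-2 of a (2n-1)-vector; bottom value b_j (1-based j)
   sits in column j-1 of an n-column matrix. *)

definition minv :: "real mat \<Rightarrow> real mat" where
  "minv A = the (mat_inverse A)"

text \<open>Canonical summing matrix S: rows 0..n-2 are a_n, ..., a_2 (row r is a_(n-r),
  a_i = b_1 + ... + b_i), rows n-1 .. 2n-2 are b_1, ..., b_n.\<close>
definition Smat :: "nat \<Rightarrow> real mat" where
  "Smat n = mat (2*n-1) n (\<lambda>(r,c).
     if r < n - 1 then (if c + 1 \<le> n - r then 1 else 0)
     else (if c = r - (n - 1) then 1 else 0))"

text \<open>Index of the aggregate in top row r of y_[k]: n, ..., k+1, k-1, ..., 1.\<close>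
definition topidx :: "nat \<Rightarrow> nat \<Rightarrow> nat \<Rightarrow> nat" where
  "topidx n k r = (if r < n - k then n - r else n - r - 1)"

definition Skmat :: "nat \<Rightarrow> nat \<Rightarrow> real mat" where
  "Skmat n k = mat (2*n-1) n (\<lambda>(r,c).
     if r < n - 1 then
       (let i = topidx n k r in
        if k < i then (if k \<le> c + 1 \<and> c + 1 \<le> i then 1 else 0)
        else (if i \<le> c + 1 \<and> c + 1 \<le> k then 1 else 0))
     else (if c = r - (n - 1) then 1 else 0))"

text \<open>B_[k]: identity for k = 1; for k \<ge> 2 maps
  z = (u_n..u_(k+1), u_(k-1)..u_1, v_1..v_n) to
  (u_n..u_(k+1), v_k, u_(k-1)..u_1, -v_1..-v_(k-1), v_(k+1)..v_n).
  0-based: output p < n-k takes z_p; p = n-k takes z_(n+k-2) (= v_k);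
  n-k < p < n takes z_(p-1); n \<le> p < n+k-1 takes -z_(p-1); p \<ge> n+k-1 takes z_p.\<close>
definition Bkmat :: "nat \<Rightarrow> nat \<Rightarrow> real mat" where
  "Bkmat n k = (if k = 1 then 1\<^sub>m (2*n-1) else mat (2*n-1) (2*n-1) (\<lambda>(p,q).
     if p < n - k then (if q = p then 1 else 0)
     else if p = n - k then (if q = n + k - 2 then 1 else 0)
     else if p < n then (if q = p - 1 then 1 else 0)
     else if p < n + k - 1 then (if q = p - 1 then -1 else 0)
     else (if q = p then 1 else 0)))"

end

theory Submission imports Defs "Jordan_Normal_Form.Determinant" begin

definition sig :: "nat \<Rightarrow> nat \<Rightarrow> nat \<Rightarrow> nat" where
  "sig n k p = (if p < n - k then p else if p = n - k then n + k - 2 else if p < n + k - 1 then p - 1 else p)"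
definition sg :: "nat \<Rightarrow> nat \<Rightarrow> nat \<Rightarrow> real" where
  "sg n k p = (if n \<le> p \<and> p < n + k - 1 then -1 else 1)"

lemma Bk_entry: assumes "1 \<le> k" "k \<le> n" "1 < n" "p < 2*n-1" "q < 2*n-1"
  shows "Bkmat n k $$ (p,q) = (if q = sig n k p then sg n k p else 0)"
proof (cases "k = 1")
  case True
  have "sig n k p = p" using True assms by (auto simp: sig_def)
  moreover have "sg n k p = 1" using True by (simp add: sg_def)
  ultimately show ?thesis using True assms by (simp add: Bkmat_def)
next
  case False
  have e: "Bkmat n k $$ (p,q) = (if p < n - k then (if q = p then 1 else 0)
     else if p = n - k then (if q = n + k - 2 then 1 else 0)
     else if p < n then (if q = p - 1 then 1 else 0)
     else if p < n + k - 1 then (if q = p - 1 then -1 else 0)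
     else (if q = p then 1 else 0))" using False assms by (simp add: Bkmat_def)
  show ?thesis
  proof -
    consider "p < n - k" | "p = n - k" | "n - k < p \<and> p < n" | "n \<le> p \<and> p < n + k - 1" | "n + k - 1 \<le> p"
      by linarith
    then show "?thesis"
    proof cases
      case 1 then have "\<not> n \<le> p" using assms by linarith
      then show ?thesis using 1 unfolding e by (simp add: sig_def sg_def)
    next
      case 2 then have "\<not> n \<le> p" using assms by linarith
      then show ?thesis using 2 unfolding e by (simp add: sig_def sg_def)
    next
      case 3
      then have "\<not> p < n - k" "p \<noteq> n - k" "p < n + k - 1" using assms by linarith+
      then show ?thesis using 3 unfolding e by (simp add: sig_def sg_def)
    next
      case 4
      then have "\<not> p < n - k" "p \<noteq> n - k" "\<not> p < n" using assms by linarith+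
      then show ?thesis using 4 unfolding e by (simp add: sig_def sg_def)
    next
      case 5
      then have "\<not> p < n - k" "p \<noteq> n - k" "\<not> p < n" "\<not> p < n + k - 1" using assms by linarith+
      then show ?thesis using 5 unfolding e by (simp add: sig_def sg_def)
    qed
  qed
qed

lemma Bk_carrier: "Bkmat n k \<in> carrier_mat (2*n-1) (2*n-1)"
  by (simp add: Bkmat_def)

lemma Bk_dim[simp]: "dim_row (Bkmat n k) = 2*n-1" "dim_col (Bkmat n k) = 2*n-1"
  using Bk_carrier[of n k] by (simp_all only: carrier_mat_def mem_Collect_eq)

lemma Bk_alt: assumes "1 \<le> k" "k \<le> n" "1 < n"
  shows "Bkmat n k = mat (2*n-1) (2*n-1) (\<lambda>(p,q). if q = sig n k p then sg n k p else 0)"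
  by (rule eq_matI) (simp_all add: Bk_entry[OF assms])

lemma sig_lt: assumes "1 \<le> k" "k \<le> n" "1 < n" "p < 2*n-1" shows "sig n k p < 2*n-1"
  using assms by (auto simp: sig_def)

lemma sig_cases: assumes "1 \<le> k" "k \<le> n"
  shows "(p < n - k \<and> sig n k p = p) \<or> (p = n - k \<and> sig n k p = n + k - 2) \<or>
    (n - k < p \<and> p < n + k - 1 \<and> sig n k p = p - 1 \<and> n - k \<le> p - 1 \<and> p - 1 < n + k - 2) \<or>
    (n + k - 1 \<le> p \<and> sig n k p = p)"
proof -
  consider "p < n - k" | "p = n - k" | "n - k < p \<and> p < n + k - 1" | "n + k - 1 \<le> p" by linarith
  then show ?thesis
  proof cases
    case 1 then show ?thesis by (simp add: sig_def)
  next
    case 2 then show ?thesis by (simp add: sig_def)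
  next
    case 3
    then have "\<not> p < n - k" "p \<noteq> n - k" using assms by linarith+
    then have "sig n k p = p - 1" using 3 by (simp add: sig_def)
    then show ?thesis using 3 assms by linarith
  next
    case 4
    then have "\<not> p < n - k" "p \<noteq> n - k" "\<not> p < n + k - 1" using assms by linarith+
    then have "sig n k p = p" by (simp add: sig_def)
    then show ?thesis using 4 assms by linarith
  qed
qed

lemma sig_inj: assumes "1 \<le> k" "k \<le> n" "1 < n" "p < 2*n-1" "q < 2*n-1" "sig n k p = sig n k q"
  shows "p = q"
  using sig_cases[OF assms(1,2), of p] sig_cases[OF assms(1,2), of q] assms by linarith

lemma sg_sq: "sg n k p * sg n k p = 1" by (simp add: sg_def)

lemma permmult: assumes "1 \<le> k" "k \<le> n" "1 < n" "A \<in> carrier_mat (2*n-1) m" "p < 2*n-1" "c < m"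
  shows "(Bkmat n k * A) $$ (p,c) = sg n k p * A $$ (sig n k p, c)"
proof -
  have "(Bkmat n k * A) $$ (p,c) = (\<Sum>q<2*n-1. Bkmat n k $$ (p,q) * A $$ (q,c))"
    using assms by (simp add: scalar_prod_def lessThan_atLeast0)
  also have "\<dots> = (\<Sum>q<2*n-1. if q = sig n k p then sg n k p * A $$ (q,c) else 0)"
    by (intro sum.cong) (auto simp: Bk_entry[OF assms(1-3,5)])
  also have "\<dots> = sg n k p * A $$ (sig n k p, c)"
    using sig_lt[OF assms(1-3,5)] by simp
  finally show ?thesis .
qed

lemma BBt: assumes "1 \<le> k" "k \<le> n" "1 < n"
  shows "Bkmat n k * (Bkmat n k)\<^sup>T = 1\<^sub>m (2*n-1)"
proof (rule eq_matI)
  fix p q assume pq: "p < dim_row (1\<^sub>m (2*n-1)::real mat)" "q < dim_col (1\<^sub>m (2*n-1)::real mat)"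
  hence p: "p < 2*n-1" and q: "q < 2*n-1" by auto
  have "(Bkmat n k * (Bkmat n k)\<^sup>T) $$ (p,q) = sg n k p * (Bkmat n k)\<^sup>T $$ (sig n k p, q)"
    by (rule permmult[OF assms]) (use p q in auto)
  also have "\<dots> = sg n k p * (if sig n k p = sig n k q then sg n k q else 0)"
    using p q sig_lt[OF assms p] by (simp add: Bk_entry[OF assms q])
  also have "\<dots> = 1\<^sub>m (2*n-1) $$ (p,q)"
    using p q sig_inj[OF assms p q] sg_sq by auto
  finally show "(Bkmat n k * (Bkmat n k)\<^sup>T) $$ (p,q) = 1\<^sub>m (2*n-1) $$ (p,q)" .
qed auto


definition Tm :: "nat \<Rightarrow> nat \<Rightarrow> real mat" where
  "Tm n k = mat n n (\<lambda>(i,c). (if i = 0 then (if c < k then 1 else 0) else 0)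
     - (if i = c + 1 then (if c + 2 \<le> k then 1 else 0) else 0)
     + (if i = c then (if k \<le> c then 1 else 0) else 0))"

definition Ti :: "nat \<Rightarrow> nat \<Rightarrow> real mat" where
  "Ti n k = mat n n (\<lambda>(l,j). (if j = l then (if k \<le> l then 1 else 0) else 0)
     - (if j = l + 1 then (if l + 2 \<le> k then 1 else 0) else 0)
     + (if l + 1 = k then (if j < k then 1 else 0) else 0))"

lemma Tm_carrier: "Tm n k \<in> carrier_mat n n" by (simp add: Tm_def)
lemma Ti_carrier: "Ti n k \<in> carrier_mat n n" by (simp add: Ti_def)
lemma S_carrier: "Smat n \<in> carrier_mat (2*n-1) n" by (simp add: Smat_def)
lemma Sk_carrier: "Skmat n k \<in> carrier_mat (2*n-1) n" by (simp add: Skmat_def)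

lemma sumT: assumes "m \<le> n" "c < n"
  shows "(\<Sum>j<m. Tm n k $$ (j,c)) = (if 0 < m \<and> c < k then 1 else 0)
     - (if c + 1 < m \<and> c + 2 \<le> k then 1 else 0) + (if c < m \<and> k \<le> c then 1 else 0)"
proof -
  have "(\<Sum>j<m. Tm n k $$ (j,c)) = (\<Sum>j<m. (if j = 0 then (if c < k then 1 else 0) else 0)
     - (if j = c + 1 then (if c + 2 \<le> k then 1 else 0) else 0)
     + (if j = c then (if k \<le> c then 1 else 0) else 0))"
    by (intro sum.cong) (use assms in \<open>auto simp: Tm_def\<close>)
  also have "\<dots> = (\<Sum>j<m. (if j = 0 then (if c < k then 1 else 0) else 0))
     - (\<Sum>j<m. (if j = c + 1 then (if c + 2 \<le> k then 1 else 0) else 0))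
     + (\<Sum>j<m. (if j = c then (if k \<le> c then 1 else 0) else 0))"
    by (simp add: sum.distrib sum_subtractf)
  also have "\<dots> = (if 0 < m \<and> c < k then 1 else 0)
     - (if c + 1 < m \<and> c + 2 \<le> k then 1 else 0) + (if c < m \<and> k \<le> c then 1 else 0)"
    by simp
  finally show ?thesis .
qed


lemma STentry: assumes "1 < n" "p < 2*n-1" "c < n"
  shows "(Smat n * Tm n k) $$ (p,c) = (if p < n - 1 then
     (if c < k then 1 else 0) - (if c + 1 < n - p \<and> c + 2 \<le> k then 1 else 0) + (if c < n - p \<and> k \<le> c then 1 else 0)
     else Tm n k $$ (p - (n - 1), c))" (is "_ = ?rhs")
proof -
  have "(Smat n * Tm n k) $$ (p,c) = (\<Sum>j<n. Smat n $$ (p,j) * Tm n k $$ (j,c))"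
    using assms by (simp add: Smat_def Tm_def scalar_prod_def lessThan_atLeast0)
  also have "\<dots> = (if p < n - 1 then (\<Sum>j<n - p. Tm n k $$ (j,c)) else Tm n k $$ (p - (n - 1), c))"
  proof (cases "p < n - 1")
    case True
    have "(\<Sum>j<n. Smat n $$ (p,j) * Tm n k $$ (j,c)) = (\<Sum>j<n. if j < n - p then Tm n k $$ (j,c) else 0)"
      by (intro sum.cong) (use assms True in \<open>auto simp: Smat_def\<close>)
    also have "\<dots> = sum (\<lambda>j. Tm n k $$ (j,c)) {j \<in> {..<n}. j < n - p}"
      by (rule sum.inter_filter[symmetric]) simp
    also have "{j \<in> {..<n}. j < n - p} = {..<n-p}" by auto
    finally show ?thesis using True by simp
  next
    case False
    have "(\<Sum>j<n. Smat n $$ (p,j) * Tm n k $$ (j,c)) = (\<Sum>j<n. if j = p - (n - 1) then Tm n k $$ (j,c) else 0)"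
      by (intro sum.cong) (use assms False in \<open>auto simp: Smat_def\<close>)
    also have "\<dots> = Tm n k $$ (p - (n - 1), c)" using assms False by simp
    finally show ?thesis using False by simp
  qed
  also have "\<dots> = ?rhs"
  proof (cases "p < n - 1")
    case True
    then have "0 < n - p" by linarith
    then show ?thesis using True assms by (simp add: sumT)
  qed simp
  finally show ?thesis .
qed


lemma Sk_top: assumes "r < n - 1" "c < n"
  shows "Skmat n k $$ (r,c) = (if k < topidx n k r then (if k \<le> c + 1 \<and> c + 1 \<le> topidx n k r then 1 else 0)
        else (if topidx n k r \<le> c + 1 \<and> c + 1 \<le> k then 1 else 0))"
  using assms by (simp add: Skmat_def Let_def)

lemma Sk_bot: assumes "n - 1 \<le> r" "r < 2*n-1" "c < n"
  shows "Skmat n k $$ (r,c) = (if c = r - (n - 1) then 1 else 0)"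
  using assms by (simp add: Skmat_def)

lemma Tm_entry: assumes "i < n" "c < n"
  shows "Tm n k $$ (i,c) = (if i = 0 then (if c < k then 1 else 0) else 0)
     - (if i = c + 1 then (if c + 2 \<le> k then 1 else 0) else 0)
     + (if i = c then (if k \<le> c then 1 else 0) else 0)"
  using assms by (simp add: Tm_def)

lemma BSk: assumes "1 \<le> k" "k \<le> n" "1 < n"
  shows "Bkmat n k * Skmat n k = Smat n * Tm n k"
proof (rule eq_matI)
  fix p c assume "p < dim_row (Smat n * Tm n k)" "c < dim_col (Smat n * Tm n k)"
  hence p: "p < 2*n-1" and c: "c < n" by (auto simp: Smat_def Tm_def)
  have L: "(Bkmat n k * Skmat n k) $$ (p,c) = sg n k p * Skmat n k $$ (sig n k p, c)"
    by (rule permmult[OF assms _ p c]) (rule Sk_carrier)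
  note R = STentry[OF assms(3) p c, of k]
  consider "p < n - k" | "p = n - k" "k = 1" | "p = n - k" "k \<noteq> 1" | "n - k < p" "p < n - 1"
    | "p = n - 1" "k \<noteq> 1" | "n \<le> p" "p < n + k - 1" | "n + k - 1 \<le> p" by linarith
  then show "(Bkmat n k * Skmat n k) $$ (p,c) = (Smat n * Tm n k) $$ (p,c)"
  proof cases
    case 1
    then have "sig n k p = p" "sg n k p = 1" "p < n - 1" "topidx n k p = n - p" "k < n - p"
      using assms by (auto simp: sig_def sg_def topidx_def)
    then show ?thesis unfolding L R using c by (simp add: Sk_top)
  next
    case 2
    then have "sig n k p = n - 1" "sg n k p = 1" "\<not> p < n - 1" "p - (n - 1) = 0"
      using assms by (auto simp: sig_def sg_def)
    then show ?thesis unfolding L R using c assms 2 by (simp add: Sk_bot Tm_entry)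
  next
    case 3
    then have "sig n k p = n + k - 2" "sg n k p = 1" "p < n - 1" "n - p = k" "n - 1 \<le> n + k - 2"
      using assms by (auto simp: sig_def sg_def)
    moreover have "Skmat n k $$ (n + k - 2, c) = (if c = k - 1 then 1 else 0)"
      using Sk_bot[of n "n + k - 2" c k] c assms 3 by simp
    ultimately show ?thesis
    proof (cases "c = k - 1")
      case True
      then have "c < k" "\<not> c + 2 \<le> k" "\<not> k \<le> c" using assms by linarith+
      then show ?thesis unfolding L R using True 3 c \<open>n - p = k\<close> \<open>p < n - 1\<close> \<open>sg n k p = 1\<close> \<open>sig n k p = n + k - 2\<close>
        \<open>Skmat n k $$ (n + k - 2, c) = (if c = k - 1 then 1 else 0)\<close> by simp
    next
      case False
      then have "c < k \<Longrightarrow> c + 2 \<le> k" "c < k \<Longrightarrow> c + 1 < k" using assms by linarith+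
      then show ?thesis unfolding L R using False 3 c \<open>n - p = k\<close> \<open>p < n - 1\<close> \<open>sg n k p = 1\<close> \<open>sig n k p = n + k - 2\<close>
        \<open>Skmat n k $$ (n + k - 2, c) = (if c = k - 1 then 1 else 0)\<close> by simp
    qed
  next
    case 4
    then have "sig n k p = p - 1" "sg n k p = 1" "p - 1 < n - 1" "topidx n k (p - 1) = n - p" "\<not> k < n - p"
      using assms by (auto simp: sig_def sg_def topidx_def)
    then show ?thesis unfolding L R using c 4 by (simp add: Sk_top)
  next
    case 5
    then have "sig n k p = p - 1" "sg n k p = 1" "p - 1 < n - 1" "topidx n k (p - 1) = 1" "\<not> k < 1"
       "p - (n - 1) = 0"
      using assms by (auto simp: sig_def sg_def topidx_def)
    then show ?thesis unfolding L R using c 5 by (simp add: Sk_top Tm_entry)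
  next
    case 6
    then have "sig n k p = p - 1" "sg n k p = -1" "n - 1 \<le> p - 1" "\<not> p < n - 1" "p - 1 - (n - 1) = p - n"
      "p - (n - 1) = p - n + 1" "p - n + 1 < n" "p - n + 1 < k"
      using assms by (auto simp: sig_def sg_def)
    moreover have "Skmat n k $$ (p - 1, c) = (if c = p - n then 1 else 0)"
      using Sk_bot[of n "p - 1" c k] c 6 p assms by simp
    ultimately show ?thesis unfolding L R using c 6 p by (simp add: Tm_entry)
  next
    case 7
    then have "sig n k p = p" "sg n k p = 1" "n - 1 \<le> p" "\<not> p < n - 1" "p - (n - 1) < n" "k \<le> p - (n - 1)" "\<not> Suc p \<le> n"
      using assms p by (auto simp: sig_def sg_def)
    then show ?thesis unfolding L R using c 7 p by (simp add: Sk_bot Tm_entry)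
  qed
qed (auto simp: Smat_def Tm_def Skmat_def)

lemma TiT: assumes "1 \<le> k" "k \<le> n"
  shows "Ti n k * Tm n k = 1\<^sub>m n"
proof (rule eq_matI)
  fix l c assume "l < dim_row (1\<^sub>m n :: real mat)" "c < dim_col (1\<^sub>m n :: real mat)"
  hence l: "l < n" and c: "c < n" by auto
  have "(Ti n k * Tm n k) $$ (l,c) = (\<Sum>i<n. Ti n k $$ (l,i) * Tm n k $$ (i,c))"
    using l c by (simp add: Ti_def Tm_def scalar_prod_def lessThan_atLeast0)
  also have "\<dots> = (\<Sum>i<n. (if i = l then (if k \<le> l then Tm n k $$ (l,c) else 0) else 0))
      - (\<Sum>i<n. (if i = l + 1 then (if l + 2 \<le> k then Tm n k $$ (l+1,c) else 0) else 0))
      + (\<Sum>i<n. (if l + 1 = k then (if i < k then Tm n k $$ (i,c) else 0) else 0))"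
    unfolding sum_subtractf[symmetric] sum.distrib[symmetric]
    by (intro sum.cong) (use l in \<open>auto simp: Ti_def algebra_simps\<close>)
  also have "\<dots> = (if k \<le> l then Tm n k $$ (l,c) else 0)
      - (if l + 2 \<le> k then Tm n k $$ (l+1,c) else 0)
      + (if l + 1 = k then (\<Sum>i<k. Tm n k $$ (i,c)) else 0)"
  proof -
    have "(\<Sum>i<n. (if i < k then Tm n k $$ (i,c) else 0)) = (\<Sum>i<k. Tm n k $$ (i,c))"
    proof -
      have "(\<Sum>i<n. (if i < k then Tm n k $$ (i,c) else 0)) = sum (\<lambda>i. Tm n k $$ (i,c)) {i \<in> {..<n}. i < k}"
        by (rule sum.inter_filter[symmetric]) simp
      also have "{i \<in> {..<n}. i < k} = {..<k}" using assms by auto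
      finally show ?thesis .
    qed
    moreover have "l + 2 \<le> k \<Longrightarrow> l + 1 < n" using assms by linarith
    ultimately show ?thesis using l by auto
  qed
  also have "\<dots> = 1\<^sub>m n $$ (l,c)"
  proof -
    consider "k \<le> l" | "l + 2 \<le> k" | "l + 1 = k" by linarith
    then show ?thesis
    proof cases
      case 1
      then have "l \<noteq> 0" "\<not> l + 2 \<le> k" "l + 1 \<noteq> k" using assms by linarith+
      then show ?thesis using 1 l c by (simp add: Tm_entry)
    next
      case 2
      then have "\<not> k \<le> l" "l + 1 \<noteq> k" "l + 1 < n" using assms by linarith+
      then show ?thesis using 2 l c by (auto simp: Tm_entry)
    next
      case 3
      then have "\<not> k \<le> l" "\<not> l + 2 \<le> k" by linarith+
      then show ?thesis using 3 l c assms by (auto simp: sumT)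
    qed
  qed
  finally show "(Ti n k * Tm n k) $$ (l,c) = 1\<^sub>m n $$ (l,c)" .
qed (auto simp: Ti_def Tm_def)


lemma minv_eq: assumes A: "A \<in> carrier_mat m m" and B: "B \<in> carrier_mat m m" and AB: "A * B = 1\<^sub>m m"
  shows "minv A = B"
proof -
  have BA: "B * A = 1\<^sub>m m" using mat_mult_left_right_inverse[OF A B AB] .
  have "A \<in> Units (ring_mat TYPE(real) m undefined)"
    using A B AB BA by (auto simp: Units_def ring_mat_simps)
  then obtain C where C: "mat_inverse A = Some C"
    using mat_inverse(1)[OF A, of undefined] by (cases "mat_inverse A") auto
  then have C': "A * C = 1\<^sub>m m" "C * A = 1\<^sub>m m" "C \<in> carrier_mat m m"
    using mat_inverse(2)[OF A] by auto
  have "C = C * (A * B)" using C' by (simp add: AB)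
  also have "\<dots> = (C * A) * B" by (rule assoc_mult_mat[OF C'(3) A B, symmetric])
  also have "\<dots> = B" using C' B by simp
  finally show ?thesis using C by (simp add: minv_def)
qed

lemma inv_props: assumes "invertible_mat A" "A \<in> carrier_mat m m"
  shows "minv A \<in> carrier_mat m m" "A * minv A = 1\<^sub>m m" "minv A * A = 1\<^sub>m m"
proof -
  obtain B where AB: "A * B = 1\<^sub>m (dim_row A)" and BA: "B * A = 1\<^sub>m (dim_row B)"
    using assms(1) unfolding invertible_mat_def inverts_mat_def by blast
  have "dim_col (B * A) = m" using assms(2) by simp
  then have "dim_row B = m" using BA by simp
  moreover have "dim_col B = m" using AB assms(2) by (metis carrier_matD(1) index_mult_mat(3) index_one_mat(3))
  ultimately have B: "B \<in> carrier_mat m m" by auto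
  have AB': "A * B = 1\<^sub>m m" using AB assms(2) by simp
  have "minv A = B" by (rule minv_eq[OF assms(2) B AB'])
  then show "minv A \<in> carrier_mat m m" "A * minv A = 1\<^sub>m m" "minv A * A = 1\<^sub>m m"
    using B AB' mat_mult_left_right_inverse[OF assms(2) B AB'] by auto
qed

lemma invI: fixes A :: "real mat" assumes "A \<in> carrier_mat m m" "B \<in> carrier_mat m m" "A * B = 1\<^sub>m m"
  shows "invertible_mat A"
  using assms mat_mult_left_right_inverse[OF assms]
  unfolding invertible_mat_def inverts_mat_def square_mat.simps by (intro conjI exI[of _ B]) auto

lemma massoc: "dim_col (A::real mat) = dim_row B \<Longrightarrow> dim_col B = dim_row C \<Longrightarrow> A * B * C = A * (B * C)"
  by (rule assoc_mult_mat[of A "dim_row A" "dim_col A" B "dim_col B" C "dim_col C"]) auto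

lemma massocv: "dim_col (A::real mat) = dim_row B \<Longrightarrow> dim_col B = dim_vec v \<Longrightarrow> A * B *\<^sub>v v = A *\<^sub>v (B *\<^sub>v v)"
  by (rule assoc_mult_mat_vec[of A "dim_row A" "dim_col A" B "dim_col B"]) auto

lemma lcancel: assumes "(A::real mat) * B = 1\<^sub>m m" "dim_row X = m" "dim_col A = dim_row B"
  shows "A * (B * X) = X"
proof -
  have cB: "dim_col B = m" using assms(1) by (metis index_mult_mat(3) index_one_mat(3))
  have rA: "dim_row A = m" using assms(1) by (metis index_mult_mat(2) index_one_mat(2))
  have "A * (B * X) = (A * B) * X"
    by (rule assoc_mult_mat[symmetric, of A "dim_row A" "dim_col A" B "dim_col B" X "dim_col X"])
      (use assms cB in auto)
  also have "\<dots> = X" using assms(1,2) by simp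
  finally show ?thesis .
qed

theorem theorem1:
  fixes n k :: nat and W Wk :: "real mat" and yhat yhatk :: "real vec"
  assumes "n > 1" and "1 \<le> k" and "k \<le> n"
    and "W \<in> carrier_mat (2*n-1) (2*n-1)" and "invertible_mat W"
    and "invertible_mat ((Smat n)\<^sup>T * minv W * Smat n)"
    and "Wk \<in> carrier_mat (2*n-1) (2*n-1)" and "invertible_mat Wk"
    and "yhat \<in> carrier_vec (2*n-1)" and "yhatk \<in> carrier_vec (2*n-1)"
    and "yhat = Bkmat n k *\<^sub>v yhatk"
    and "minv Wk = (Bkmat n k)\<^sup>T * minv W * Bkmat n k"
  shows "invertible_mat ((Skmat n k)\<^sup>T * minv Wk * Skmat n k) \<and>
    Smat n * minv ((Smat n)\<^sup>T * minv W * Smat n) * (Smat n)\<^sup>T * minv W *\<^sub>v yhat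
    = Bkmat n k *\<^sub>v
      (Skmat n k * minv ((Skmat n k)\<^sup>T * minv Wk * Skmat n k) * (Skmat n k)\<^sup>T * minv Wk
         *\<^sub>v yhatk)"
proof -
  let ?N = "2*n-1"
  let ?B = "Bkmat n k" and ?S = "Smat n" and ?Sk = "Skmat n k" and ?T = "Tm n k" and ?Ti = "Ti n k"
  let ?Wi = "minv W"
  define M where "M = ?S\<^sup>T * ?Wi * ?S"
  define Mi where "Mi = minv M"
  let ?M = M
  let ?Mi = Mi
  note kk = assms(2,3,1)
  have Wi: "?Wi \<in> carrier_mat ?N ?N" using inv_props(1)[OF assms(5,4)] .
  have Mc: "?M \<in> carrier_mat n n" unfolding M_def using Wi S_carrier[of n] by (metis mult_carrier_mat transpose_carrier_mat)
  have Mi: "?Mi \<in> carrier_mat n n" "?M * ?Mi = 1\<^sub>m n" using inv_props[OF assms(6)[folded M_def] Mc] unfolding Mi_def by auto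
  have dims[simp]: "dim_row M = n" "dim_col M = n" "dim_row ?Wi = ?N" "dim_col ?Wi = ?N" "dim_row ?Mi = n" "dim_col ?Mi = n"
    "dim_row ?S = ?N" "dim_col ?S = n" "dim_row ?Sk = ?N" "dim_col ?Sk = n"
    "dim_row ?T = n" "dim_col ?T = n" "dim_row ?Ti = n" "dim_col ?Ti = n"
    using Wi Mi Mc by (auto simp: Smat_def Skmat_def Tm_def Ti_def)
  have TTi: "?T * ?Ti = 1\<^sub>m n"
    using mat_mult_left_right_inverse[OF Ti_carrier Tm_carrier TiT[OF kk(1,2)]] .
  have R1': "?B * ?Sk = ?S * ?T" by (rule BSk[OF kk])
  have R1: "?B * (?Sk * X) = ?S * (?T * X)" if "dim_row X = n" for X
    using that R1' by (metis massoc dims Bk_dim)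
  have R2': "?Sk\<^sup>T * ?B\<^sup>T = ?T\<^sup>T * ?S\<^sup>T"
    using R1' transpose_mult[OF Bk_carrier Sk_carrier] transpose_mult[OF S_carrier Tm_carrier] by metis
  have R2: "?Sk\<^sup>T * (?B\<^sup>T * X) = ?T\<^sup>T * (?S\<^sup>T * X)" if "dim_row X = ?N" for X
    using that R2' by (metis massoc dims Bk_dim index_transpose_mat(2,3))
  have R3: "?T * (?Ti * X) = X" if "dim_row X = n" for X
    by (rule lcancel[OF TTi that]) simp
  have R5: "?T\<^sup>T * ?Ti\<^sup>T = 1\<^sub>m n"
    using TiT[OF kk(1,2)] transpose_mult[OF Ti_carrier[of n k] Tm_carrier[of n k]] by (metis transpose_one)
  have R4: "?Ti\<^sup>T * (?T\<^sup>T * X) = X" if "dim_row X = n" for X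
  proof -
    have "?Ti\<^sup>T * ?T\<^sup>T = 1\<^sub>m n"
      using TTi transpose_mult[OF Tm_carrier[of n k] Ti_carrier[of n k]] by (metis transpose_one)
    then show ?thesis by (rule lcancel[OF _ that]) simp
  qed
  have R6: "?S\<^sup>T * (?Wi * (?S * (?Mi * X))) = X" if "dim_row X = n" for X
  proof -
    have "?M * (?Mi * X) = X" by (rule lcancel[OF Mi(2) that]) simp
    then show ?thesis unfolding M_def by (simp add: massoc)
  qed
  have Wk: "minv Wk = ?B\<^sup>T * ?Wi * ?B" by (rule assms(12))
  have G: "?Sk\<^sup>T * minv Wk * ?Sk = ?T\<^sup>T * ?M * ?T"
    unfolding Wk M_def by (simp add: massoc R1' R2)
  let ?Gi = "?Ti * ?Mi * ?Ti\<^sup>T"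
  have GG: "(?T\<^sup>T * ?M * ?T) * ?Gi = 1\<^sub>m n"
    unfolding M_def by (simp add: massoc R3 R6 R5)
  have Gc: "?T\<^sup>T * ?M * ?T \<in> carrier_mat n n" by (rule carrier_matI) simp_all
  have Gic: "?Gi \<in> carrier_mat n n" by (rule carrier_matI) simp_all
  have inv: "invertible_mat (?Sk\<^sup>T * minv Wk * ?Sk)" unfolding G by (rule invI[OF Gc Gic GG])
  have mG: "minv (?Sk\<^sup>T * minv Wk * ?Sk) = ?Gi" unfolding G by (rule minv_eq[OF Gc Gic GG])
  have MM: "?B * (?Sk * ?Gi * ?Sk\<^sup>T * minv Wk) = ?S * ?Mi * ?S\<^sup>T * ?Wi * ?B"
    unfolding Wk by (simp add: massoc R1 R2 R3 R4)
  have "?B *\<^sub>v (?Sk * minv (?Sk\<^sup>T * minv Wk * ?Sk) * ?Sk\<^sup>T * minv Wk *\<^sub>v yhatk)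
      = ?B *\<^sub>v (?Sk * ?Gi * ?Sk\<^sup>T * minv Wk *\<^sub>v yhatk)" unfolding mG ..
  also have "\<dots> = (?B * (?Sk * ?Gi * ?Sk\<^sup>T * minv Wk)) *\<^sub>v yhatk"
    using assms(10) Wk by (subst massocv) auto
  also have "\<dots> = (?S * ?Mi * ?S\<^sup>T * ?Wi * ?B) *\<^sub>v yhatk" unfolding MM ..
  also have "\<dots> = (?S * ?Mi * ?S\<^sup>T * ?Wi) *\<^sub>v yhat"
    using assms(10,11) by (subst massocv) auto
  finally show ?thesis using inv unfolding Mi_def M_def by simp
qed

end
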